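(* Let $t$ be a positive integer, $s\ge 2$, and let $G=K(n_1,\dots,n_s)$ be a complete $s$-partite graph with $n_1\ge n_2\ge\cdots\ge n_s\ge 1$. If $n_1\ge 2t$ then $\beta_t(G)=n_1$, and if $n_1\le 2t$ then $\beta_t(G)\le 2t$.
   Context: $K(n_1,\dots,n_s)$ denotes the complete $s$-partite graph whose parts have $n_1,\dots,n_s$ vertices. A set $S\subseteq V(G)$ is $t$-sparse if the induced subgraph $G[S]$ has maximum degree at most $t$; $\beta_t(G)$ is the maximum size of a $t$-sparse set of $G$. *)

theory Defs
  imports Main
begin

(* A simple graph is given by a vertex set V and a symmetric irreflexive adjacency E. *)

definition degree_in :: "('a \<Rightarrow> 'a \<Rightarrow> bool) \<Rightarrow> 'a set \<Rightarrow> 'a \<Rightarrow> nat" where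
  "degree_in E S v = card {u \<in> S. E v u}"

definition t_sparse :: "'a set \<Rightarrow> ('a \<Rightarrow> 'a \<Rightarrow> bool) \<Rightarrow> nat \<Rightarrow> 'a set \<Rightarrow> bool" where
  "t_sparse V E t S \<longleftrightarrow> S \<subseteq> V \<and> (\<forall>v\<in>S. degree_in E S v \<le> t)"

(* beta_t(G): maximum size of a t-sparse set (V finite) *)
definition beta :: "'a set \<Rightarrow> ('a \<Rightarrow> 'a \<Rightarrow> bool) \<Rightarrow> nat \<Rightarrow> nat" where
  "beta V E t = Max (card ` {S. t_sparse V E t S})"

(* Complete s-partite graph K(n_0,...,n_{s-1}): vertex (i,j) is the j-th vertex of part i *)
definition kpart_vertices :: "nat \<Rightarrow> (nat \<Rightarrow> nat) \<Rightarrow> (nat \<times> nat) set" where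
  "kpart_vertices s n = {(i, j). i < s \<and> j < n i}"

definition kpart_adj :: "(nat \<times> nat) \<Rightarrow> (nat \<times> nat) \<Rightarrow> bool" where
  "kpart_adj u v \<longleftrightarrow> fst u \<noteq> fst v"

end

theory Submission
  imports Defs
begin

lemma fin_V:
  assumes "\<And>i j. i \<le> j \<Longrightarrow> j < s \<Longrightarrow> n j \<le> n i"
  shows "kpart_vertices s n \<subseteq> {..<s} \<times> {..<n 0}"
proof
  fix x assume "x \<in> kpart_vertices s n"
  then obtain i j where x: "x = (i, j)" "i < s" "j < n i" unfolding kpart_vertices_def by blast
  have "n i \<le> n 0" using assms[of 0 i] x(2) by simp
  then show "x \<in> {..<s} \<times> {..<n 0}" using x by auto
qed

lemma sparse_bound:
  assumes mono: "\<And>i j. i \<le> j \<Longrightarrow> j < s \<Longrightarrow> n j \<le> n i"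
    and sp: "t_sparse (kpart_vertices s n) kpart_adj t S"
  shows "card S \<le> max (n 0) (2 * t)"
proof -
  have SV: "S \<subseteq> kpart_vertices s n" and deg: "\<forall>v\<in>S. degree_in kpart_adj S v \<le> t"
    using sp by (auto simp: t_sparse_def)
  have fV: "kpart_vertices s n \<subseteq> {..<s} \<times> {..<n 0}" by (rule fin_V) (rule mono)
  have finS: "finite S"
    by (rule finite_subset[OF subset_trans[OF SV fV]]) (intro finite_cartesian_product finite_lessThan)
  show ?thesis
  proof (cases "\<exists>u\<in>S. \<exists>v\<in>S. fst u \<noteq> fst v")
    case True
    then obtain u v where u: "u \<in> S" and v: "v \<in> S" and ne: "fst u \<noteq> fst v" by blast
    define A where "A = {w\<in>S. fst w = fst u}"
    define B where "B = {w\<in>S. fst w = fst v}"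
    have AB: "A \<inter> B = {}" "A \<union> B \<subseteq> S" using ne by (auto simp: A_def B_def)
    have fA: "finite A" "finite B" using finS by (auto simp: A_def B_def)
    have "card (A \<union> B) \<le> card S" using AB(2) finS card_mono by blast
    then have c1: "card A + card B \<le> card S" using card_Un_disjoint[OF fA AB(1)] by simp
    have "card (S - A) \<le> t"
    proof -
    have "{w\<in>S. kpart_adj u w} = S - A" by (auto simp: A_def kpart_adj_def)
    moreover have "degree_in kpart_adj S u \<le> t" using deg u by blast
    ultimately have "card (S - A) \<le> t" unfolding degree_in_def by simp
    then show ?thesis .
    qed
    moreover have "card (S - A) = card S - card A"
      by (rule card_Diff_subset[OF fA(1)]) (auto simp: A_def)
    moreover have "card (S - B) \<le> t"
    proof -
    have "{w\<in>S. kpart_adj v w} = S - B" by (auto simp: B_def kpart_adj_def)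
    moreover have "degree_in kpart_adj S v \<le> t" using deg v by blast
    ultimately have "card (S - B) \<le> t" unfolding degree_in_def by simp
    then show ?thesis .
    qed
    moreover have "card (S - B) = card S - card B"
      by (rule card_Diff_subset[OF fA(2)]) (auto simp: B_def)
    ultimately show ?thesis using c1 by linarith
  next
    case False
    show ?thesis
    proof (cases "S = {}")
      case True then show ?thesis by simp
    next
      case ne: False
      then obtain u where u: "u \<in> S" by blast
      let ?i = "fst u"
      have "?i < s" using u SV by (auto simp: kpart_vertices_def)
      have "S \<subseteq> {?i} \<times> {..<n ?i}"
      proof
        fix w assume w: "w \<in> S"
        then have "fst w = ?i" using False u by blast
        moreover have "snd w < n (fst w)" using w SV by (auto simp: kpart_vertices_def)
        ultimately show "w \<in> {?i} \<times> {..<n ?i}" by (cases w) auto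
      qed
      then have "card S \<le> card ({?i} \<times> {..<n ?i})" by (intro card_mono) auto
      also have "\<dots> = n ?i" by (simp add: card_cartesian_product)
      also have "\<dots> \<le> n 0" using mono \<open>?i < s\<close> by simp
      finally show ?thesis by simp
    qed
  qed
qed

theorem corollary2p2:
  fixes s t :: nat and n :: "nat \<Rightarrow> nat"
  assumes "t \<ge> 1" and "s \<ge> 2"
    and "\<And>i j. i \<le> j \<Longrightarrow> j < s \<Longrightarrow> n j \<le> n i"
    and "\<And>i. i < s \<Longrightarrow> n i \<ge> 1"
  shows "(n 0 \<ge> 2 * t \<longrightarrow> beta (kpart_vertices s n) kpart_adj t = n 0)
       \<and> (n 0 \<le> 2 * t \<longrightarrow> beta (kpart_vertices s n) kpart_adj t \<le> 2 * t)"
proof -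
  let ?V = "kpart_vertices s n"
  let ?F = "{S. t_sparse ?V kpart_adj t S}"
  have fV: "?V \<subseteq> {..<s} \<times> {..<n 0}" by (rule fin_V) (rule assms(3))
  have finV: "finite ?V"
    by (rule finite_subset[OF fV]) (intro finite_cartesian_product finite_lessThan)
  have "?F \<subseteq> Pow ?V" by (auto simp: t_sparse_def)
  then have finF: "finite (card ` ?F)" using finV by (meson finite_Pow_iff finite_imageI finite_subset)
  define P where "P = {0::nat} \<times> {..<n 0}"
  have "P \<subseteq> ?V" using assms(2) by (auto simp: P_def kpart_vertices_def)
  moreover have "degree_in kpart_adj P v = 0" if "v \<in> P" for v
  proof -
    have "{w\<in>P. kpart_adj v w} = {}" using that by (auto simp: P_def kpart_adj_def)
    then show ?thesis unfolding degree_in_def by (metis card.empty)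
  qed
  ultimately have "P \<in> ?F" by (simp add: t_sparse_def)
  then have cP: "card P \<in> card ` ?F" by blast
  have cardP: "card P = n 0" by (simp add: P_def card_cartesian_product)
  have ge: "beta ?V kpart_adj t \<ge> n 0"
    unfolding beta_def using Max_ge[OF finF cP] cardP by simp
  have "card ` ?F \<noteq> {}" using cP by blast
  then have "beta ?V kpart_adj t \<in> card ` ?F" unfolding beta_def using Max_in[OF finF] by blast
  then have le: "beta ?V kpart_adj t \<le> max (n 0) (2 * t)"
    using sparse_bound[OF assms(3)] by auto
  show ?thesis using ge le by auto
qed

end
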